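(* For every $n\ge0$, $$B^n=\sum_{m=0}^{\lfloor n/2\rfloor}[n-2m]!\Big(\sum_{\alpha\in\mathcal P_t(m\times(n-2m))}[\alpha_1+1]^2\cdots[\alpha_m+1]^2\Big)P_{n-2m}.$$
   Context: Fix $t\in\{0,1\}$. Let $\mathbf U^\imath_t=\mathbb Q(q)[B]$ be the polynomial algebra in $B$ over $\mathbb Q(q)$, $[n]=(q^n-q^{-n})/(q-q^{-1})$, $[n]!=[1]\cdots[n]$. The $\imath$-canonical basis is $P_n=\frac{B^{\sigma_t(n)}}{[n]!}\prod_{0\le k\le n-1,\ k\equiv t\ (2)}(B^2-[k]^2)$, where $\sigma_t(n)=0$ for $n$ even, $-1$ for $n$ odd and $t=0$, $1$ for $n$ odd and $t=1$ (when $\sigma_t(n)=-1$ the product contains the factor $B^2$, so $P_n$ is a polynomial). For $m,k\ge0$, $\mathcal P_t(m\times k)$ is the set of $\alpha\in\mathbb N^m$ with $0\le\alpha_1\le\cdots\le\alpha_m\le k$ and $\alpha_i\not\equiv t\pmod2$ for each $i$. *)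

theory Defs
  imports "HOL-Computational_Algebra.Polynomial" "HOL-Computational_Algebra.Fraction_Field"
begin

type_synonym Qq = "rat poly fract"

definition qvar :: Qq where
  "qvar = Fract [:0, 1:] 1"

definition qint :: "nat \<Rightarrow> Qq" where
  "qint n = (qvar ^ n - inverse qvar ^ n) / (qvar - inverse qvar)"

definition qfact :: "nat \<Rightarrow> Qq" where
  "qfact n = (\<Prod>i\<in>{1..n}. qint i)"

text \<open>The generator B of U^i_t = Q(q)[B].\<close>
definition Bgen :: "Qq poly" where
  "Bgen = [:0, 1:]"

definition sigma_t :: "nat \<Rightarrow> nat \<Rightarrow> int" where
  "sigma_t t n = (if even n then 0 else if t = 0 then -1 else 1)"

definition iprod :: "nat \<Rightarrow> nat \<Rightarrow> Qq poly" where
  "iprod t n = (\<Prod>k\<in>{k. k < n \<and> k mod 2 = t mod 2}. Bgen ^ 2 - [:qint k ^ 2:])"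

text \<open>The imath-canonical basis element P_n. When sigma_t n = -1 the product contains the
  factor B^2, so dividing by B is exact.\<close>
definition iCB :: "nat \<Rightarrow> nat \<Rightarrow> Qq poly" where
  "iCB t n = smult (inverse (qfact n))
     (if sigma_t t n = -1 then iprod t n div Bgen
      else Bgen ^ nat (sigma_t t n) * iprod t n)"

definition Pt :: "nat \<Rightarrow> nat \<Rightarrow> nat \<Rightarrow> nat list set" where
  "Pt t m k = {\<alpha>. length \<alpha> = m \<and> sorted \<alpha> \<and> (\<forall>a\<in>set \<alpha>. a \<le> k \<and> a mod 2 \<noteq> t mod 2)}"

end

theory Submission
  imports Defs
begin
lemma qvar_pow: "qvar ^ n = Fract ([:0,1:] ^ n) 1"
  by (induction n) (auto simp: qvar_def One_fract_def)
lemma qvar_nz: "qvar \<noteq> 0"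
  by (simp add: qvar_def Zero_fract_def eq_fract)
lemma qvar_pow_ne1: "n > 0 \<Longrightarrow> qvar ^ n \<noteq> 1"
proof
  assume n: "n > 0" and h: "qvar ^ n = 1"
  hence "([:0,1:] ^ n :: rat poly) = 1" by (simp add: qvar_pow One_fract_def eq_fract)
  hence "degree ([:0,1:] ^ n :: rat poly) = 0" by simp
  moreover have "degree ([:0,1:] ^ n :: rat poly) = n" by (simp add: degree_power_eq)
  ultimately show False using n by simp
qed
lemma qint_nz: "i > 0 \<Longrightarrow> qint i \<noteq> 0"
proof -
  assume i: "i > 0"
  have a: "qvar ^ k - inverse qvar ^ k \<noteq> 0" if "k > 0" for k
  proof
    assume "qvar ^ k - inverse qvar ^ k = 0"
    hence "qvar ^ k * qvar ^ k = qvar ^ k * inverse qvar ^ k" by simp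
    also have "\<dots> = 1" using qvar_nz by (simp add: power_mult_distrib[symmetric])
    finally have "qvar ^ (2*k) = 1" by (simp add: power_add[symmetric] mult_2)
    thus False using qvar_pow_ne1[of "2*k"] that by simp
  qed
  show ?thesis using a[OF i] a[of 1] by (simp add: qint_def)
qed
lemma qint0: "qint 0 = 0" by (simp add: qint_def)
lemma qfact_nz: "qfact n \<noteq> 0"
  by (simp add: qfact_def qint_nz)
definition Q :: "nat \<Rightarrow> nat \<Rightarrow> Qq poly" where
  "Q t n = (if sigma_t t n = -1 then iprod t n div Bgen
      else Bgen ^ nat (sigma_t t n) * iprod t n)"
definition Y :: "nat \<Rightarrow> nat \<Rightarrow> Qq" where
  "Y t j = (if j mod 2 = t mod 2 then qint j ^ 2 else 0)"

lemma iprod_Suc: "iprod t (Suc n) = iprod t n * (if n mod 2 = t mod 2 then Bgen^2 - [:qint n^2:] else 1)"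
proof -
  have "{k. k < Suc n \<and> k mod 2 = t mod 2} = (if n mod 2 = t mod 2 then insert n {k. k < n \<and> k mod 2 = t mod 2} else {k. k < n \<and> k mod 2 = t mod 2})"
    by (auto simp: less_Suc_eq)
  thus ?thesis by (simp add: iprod_def mult.commute)
qed
lemma iprod_0: "iprod t 0 = 1" by (simp add: iprod_def)

lemma Bdvd_iprod0: "n > 0 \<Longrightarrow> Bgen dvd iprod 0 n"
proof (induction n)
  case 0 then show ?case by simp
next
  case (Suc n)
  show ?case
  proof (cases "n = 0")
    case True then show ?thesis by (simp add: iprod_Suc iprod_0 qint0)
  next
    case False then show ?thesis using Suc by (simp add: iprod_Suc)
  qed
qed

lemma L1: assumes "t \<in> {0,1}" "j mod 2 \<noteq> t mod 2" shows "Q t (Suc j) = Bgen * Q t j"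
proof (cases "t = 0")
  case True
  then have o: "odd j" "j mod 2 = 1" using assms by auto
  then have "Bgen dvd iprod 0 j" using Bdvd_iprod0[of j] by (cases j) auto
  then show ?thesis using True o by (simp add: Q_def sigma_t_def iprod_Suc)
next
  case False
  then have t: "t = 1" using assms by auto
  then have o: "even j" "j mod 2 = 0" using assms by auto
  show ?thesis using t o by (simp add: Q_def sigma_t_def iprod_Suc)
qed

lemma L2: assumes "t \<in> {0,1}" "Suc i mod 2 = t mod 2"
  shows "Q t (Suc (Suc i)) = Q t i * (Bgen^2 - [:qint (Suc i)^2:])"
proof (cases "t = 0")
  case True
  then have o: "odd i" "i mod 2 = 1" using assms by presburger+
  then have d: "Bgen dvd iprod 0 i" using Bdvd_iprod0[of i] by (cases i) auto
  have "Q t (Suc (Suc i)) = iprod 0 i * (Bgen^2 - [:qint (Suc i)^2:]) div Bgen"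
    using True o assms by (simp add: Q_def sigma_t_def iprod_Suc)
  also have "\<dots> = iprod 0 i div Bgen * (Bgen^2 - [:qint (Suc i)^2:])"
    using d by (metis div_mult_swap mult.commute)
  finally show ?thesis using True o by (simp add: Q_def sigma_t_def)
next
  case False
  then have t: "t = 1" using assms by auto
  then have o: "even i" "i mod 2 = 0" using assms by presburger+
  show ?thesis using t o assms by (simp add: Q_def sigma_t_def iprod_Suc)
qed

lemma QR: assumes "t \<in> {0,1}" shows "Bgen * Q t j = Q t (Suc j) + smult (Y t j) (Q t (j - 1))"
proof (cases "j mod 2 = t mod 2")
  case False then show ?thesis using L1[OF assms False] by (simp add: Y_def)
next
  case True
  show ?thesis
  proof (cases j)
    case 0
    then have "t = 0" using True assms by auto
    then show ?thesis using 0 by (simp add: Y_def qint0 Q_def sigma_t_def iprod_Suc iprod_0 power2_eq_square)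
  next
    case (Suc i)
    have ni: "i mod 2 \<noteq> t mod 2" using True Suc by presburger
    have "Bgen * Q t j = Bgen * (Bgen * Q t i)" using L1[OF assms ni] Suc by simp
    also have "\<dots> = Q t i * (Bgen^2 - [:qint (Suc i)^2:]) + smult (qint (Suc i)^2) (Q t i)"
      by (simp add: algebra_simps power2_eq_square right_diff_distrib)
    finally show ?thesis using L2[OF assms] True Suc by (simp add: Y_def)
  qed
qed
definition w :: "nat list \<Rightarrow> Qq" where
  "w xs = prod_list (map (\<lambda>a. qint (a+1)^2) xs)"
definition h :: "nat \<Rightarrow> nat \<Rightarrow> nat \<Rightarrow> Qq" where
  "h t m k = (\<Sum>\<alpha>\<in>Pt t m k. w \<alpha>)"

lemma prod_nth_list: "(\<Prod>i<length xs. f (xs!i)) = prod_list (map f xs)"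
  by (induction xs) (simp_all add: prod.lessThan_Suc_shift del: prod.lessThan_Suc)

lemma Pt_fin: "finite (Pt t m k)"
  by (rule finite_subset[OF _ finite_lists_length_eq[OF finite_atMost, of k m]]) (auto simp: Pt_def)

lemma Pt_same: "Suc k mod 2 = t mod 2 \<Longrightarrow> Pt t m (Suc k) = Pt t m k"
  unfolding Pt_def by (auto simp: le_Suc_eq)

lemma Pt_notin: "{\<alpha>\<in>Pt t m (Suc k). Suc k \<notin> set \<alpha>} = Pt t m k"
  unfolding Pt_def by (auto simp: le_Suc_eq)

lemma Pt_notin0: "{\<alpha>\<in>Pt t (Suc m) 0. 0 \<notin> set \<alpha>} = {}"
  unfolding Pt_def by (auto simp: length_Suc_conv)

lemma Pt_zero: "Pt t 0 k = {[]}"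
  unfolding Pt_def by auto

lemma Pt_split: "Pt t (Suc m) k = {\<alpha>\<in>Pt t (Suc m) k. k \<notin> set \<alpha>} \<union>
   (\<lambda>\<beta>. \<beta> @ [k]) ` (if k mod 2 \<noteq> t mod 2 then Pt t m k else {})"
proof (intro equalityI subsetI)
  fix \<alpha> assume a: "\<alpha> \<in> Pt t (Suc m) k"
  show "\<alpha> \<in> {\<alpha>\<in>Pt t (Suc m) k. k \<notin> set \<alpha>} \<union>
   (\<lambda>\<beta>. \<beta> @ [k]) ` (if k mod 2 \<noteq> t mod 2 then Pt t m k else {})"
  proof (cases "k \<in> set \<alpha>")
    case False then show ?thesis using a by auto
  next
    case True
    have ne: "\<alpha> \<noteq> []" using True by auto
    define \<beta> where "\<beta> = butlast \<alpha>"
    have ab: "\<alpha> = \<beta> @ [last \<alpha>]" using ne by (simp add: \<beta>_def)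
    have s: "sorted (\<beta> @ [last \<alpha>])" using a ne unfolding Pt_def \<beta>_def by simp
    have bnd: "\<forall>x\<in>set \<alpha>. x \<le> k \<and> x mod 2 \<noteq> t mod 2" using a unfolding Pt_def by auto
    have lk: "last \<alpha> \<le> k" using bnd ne by auto
    have "k \<le> last \<alpha>"
    proof -
      have "k \<in> set (\<beta> @ [last \<alpha>])" using True ne unfolding \<beta>_def by simp
      then have "k \<in> set \<beta> \<or> k = last \<alpha>" by auto
      then show ?thesis using s by (auto simp: sorted_append)
    qed
    then have lk2: "last \<alpha> = k" using lk by simp
    have km: "k mod 2 \<noteq> t mod 2" using bnd True by auto
    have "length \<beta> = m" using a unfolding Pt_def \<beta>_def by simp
    moreover have "sorted \<beta>" using s by (simp add: sorted_append)
    moreover have "set \<beta> \<subseteq> set \<alpha>" unfolding \<beta>_def by (rule in_set_butlastD[THEN subsetI])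
    ultimately have "\<beta> \<in> Pt t m k" using bnd unfolding Pt_def by blast
    then have "\<alpha> \<in> (\<lambda>\<beta>. \<beta> @ [k]) ` Pt t m k" using ab lk2 by (metis image_eqI)
    then show ?thesis using km by simp
  qed
next
  fix \<alpha> assume "\<alpha> \<in> {\<alpha>\<in>Pt t (Suc m) k. k \<notin> set \<alpha>} \<union>
   (\<lambda>\<beta>. \<beta> @ [k]) ` (if k mod 2 \<noteq> t mod 2 then Pt t m k else {})"
  then show "\<alpha> \<in> Pt t (Suc m) k"
    by (auto simp: Pt_def sorted_append split: if_splits)
qed

lemma hS: "h t (Suc m) k = (\<Sum>\<alpha>\<in>{\<alpha>\<in>Pt t (Suc m) k. k \<notin> set \<alpha>}. w \<alpha>)
   + (if k mod 2 \<noteq> t mod 2 then qint (k+1)^2 * h t m k else 0)"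
proof -
  let ?A = "{\<alpha>\<in>Pt t (Suc m) k. k \<notin> set \<alpha>}"
  let ?B = "(\<lambda>\<beta>. \<beta> @ [k]) ` (if k mod 2 \<noteq> t mod 2 then Pt t m k else {})"
  have fA: "finite ?A" using Pt_fin by auto
  have fB: "finite ?B" using Pt_fin by auto
  have d: "?A \<inter> ?B = {}" by auto
  have "h t (Suc m) k = sum w ?A + sum w ?B"
    unfolding h_def by (subst Pt_split) (rule sum.union_disjoint[OF fA fB d])
  also have "sum w ?B = (if k mod 2 \<noteq> t mod 2 then qint (k+1)^2 * h t m k else 0)"
  proof (cases "k mod 2 \<noteq> t mod 2")
    case True
    have "sum w ?B = (\<Sum>\<beta>\<in>Pt t m k. w (\<beta> @ [k]))"
      using True by (simp add: sum.reindex inj_on_def)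
    also have "\<dots> = (\<Sum>\<beta>\<in>Pt t m k. qint (k+1)^2 * w \<beta>)"
      by (simp add: w_def mult.commute)
    finally show ?thesis using True by (simp add: h_def sum_distrib_left)
  qed simp
  finally show ?thesis .
qed

lemma h0: "h t 0 k = 1" by (simp add: h_def Pt_zero w_def)

lemma H1a: "h t (Suc m) 0 = Y t 1 * h t m 1"
proof (cases "1 mod 2 = t mod 2")
  case True
  then have "0 mod 2 \<noteq> t mod 2" by presburger
  moreover have "h t m 1 = h t m 0" using Pt_same[of 0 t m] True by (simp add: h_def)
  ultimately show ?thesis using True hS[of t m 0] by (simp add: Pt_notin0 Y_def)
next
  case False
  then have "0 mod 2 = t mod 2" by presburger
  then show ?thesis using False hS[of t m 0] by (simp add: Pt_notin0 Y_def)
qed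

lemma hS': "h t (Suc m) (Suc k) = h t (Suc m) k + (if Suc k mod 2 \<noteq> t mod 2 then qint (Suc k + 1)^2 * h t m (Suc k) else 0)"
  using hS[of t m "Suc k"] by (simp add: Pt_notin h_def)

lemma H1b: "h t (Suc m) (Suc k) = h t (Suc m) k + Y t (k+2) * h t m (k+2)"
proof (cases "(k+2) mod 2 = t mod 2")
  case True
  then have "Suc k mod 2 \<noteq> t mod 2" by presburger
  moreover have "h t m (k+2) = h t m (Suc k)" using Pt_same[of "Suc k" t m] True by (simp add: h_def)
  ultimately show ?thesis using True hS'[of t m k] by (simp add: Y_def)
next
  case False
  then have "Suc k mod 2 = t mod 2" by presburger
  then show ?thesis using False hS'[of t m k] by (simp add: Y_def)
qed

definition C :: "nat \<Rightarrow> nat \<Rightarrow> nat \<Rightarrow> Qq" where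
  "C t n j = (if j \<le> n \<and> even (n - j) then h t ((n - j) div 2) j else 0)"

lemma CR0: "C t (Suc n) 0 = Y t 1 * C t n 1"
proof (cases "even (Suc n)")
  case True
  from True obtain m where m: "Suc n = 2*m" by (meson evenE)
  then obtain m' where m': "m = Suc m'" by (cases m) auto
  then have n: "n = 2*m' + 1" using m by simp
  have a: "C t (Suc n) 0 = h t (Suc m') 0" unfolding C_def using n by simp
  have b: "C t n 1 = h t m' 1" unfolding C_def using n by simp
  show ?thesis unfolding a b by (rule H1a)
next
  case False
  have a: "C t (Suc n) 0 = 0" unfolding C_def using False by (intro if_not_P) simp
  have b: "C t n 1 = 0" unfolding C_def using False by (intro if_not_P) auto
  show ?thesis unfolding a b by simp
qed

lemma CRS: "C t (Suc n) (Suc j) = C t n j + Y t (j+2) * C t n (j+2)"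
proof (cases "j \<le> n \<and> even (n - j)")
  case True
  then obtain m where m: "n - j = 2*m" by (meson evenE)
  then have n: "n = j + 2*m" using True by simp
  show ?thesis
  proof (cases m)
    case 0
    have a: "C t (Suc n) (Suc j) = 1" unfolding C_def using n 0 by (simp add: h0)
    have b: "C t n j = 1" unfolding C_def using n 0 by (simp add: h0)
    have c: "C t n (j+2) = 0" unfolding C_def using n 0 by simp
    show ?thesis unfolding a b c by simp
  next
    case (Suc m')
    have a: "C t (Suc n) (Suc j) = h t (Suc m') (Suc j)" unfolding C_def using n Suc by simp
    have b: "C t n j = h t (Suc m') j" unfolding C_def using n Suc by simp
    have c: "C t n (j+2) = h t m' (j+2)" unfolding C_def using n Suc by simp
    show ?thesis unfolding a b c by (rule H1b)
  qed
next
  case False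
  have c0: "\<not> (j + 2 \<le> n \<and> even (n - (j+2)))"
  proof
    assume h: "j + 2 \<le> n \<and> even (n - (j+2))"
    then show False using False by presburger
  qed
  have a: "C t (Suc n) (Suc j) = 0" unfolding C_def using False by (intro if_not_P) simp
  have b: "C t n j = 0" unfolding C_def using False by (intro if_not_P) simp
  have c: "C t n (j+2) = 0" unfolding C_def using c0 by (intro if_not_P) simp
  show ?thesis unfolding a b c by simp
qed

lemma C_big: "j > n \<Longrightarrow> C t n j = 0" by (simp add: C_def)

lemma Y0: "Y t 0 = 0" by (simp add: Y_def qint0)

lemma MT: assumes t: "t \<in> {0,1}" shows "Bgen ^ n = (\<Sum>j\<le>n. smult (C t n j) (Q t j))"
proof (induction n)
  case 0
  have "Q t 0 = 1" by (simp add: Q_def sigma_t_def iprod_0)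
  then show ?case by (simp add: C_def h0)
next
  case (Suc n)
  define g where "g j = smult (C t n j * Y t j) (Q t (j - 1))" for j
  have "Bgen ^ Suc n = Bgen * (\<Sum>j\<le>n. smult (C t n j) (Q t j))" using Suc by simp
  also have "\<dots> = (\<Sum>j\<le>n. smult (C t n j) (Bgen * Q t j))"
    by (simp add: sum_distrib_left mult_smult_right)
  also have "\<dots> = (\<Sum>j\<le>n. smult (C t n j) (Q t (Suc j))) + (\<Sum>j\<le>n. g j)"
    by (simp add: QR[OF t] smult_add_right sum.distrib g_def)
  also have "(\<Sum>j\<le>n. g j) = (\<Sum>j\<le>Suc (Suc n). g j)"
    by (simp add: g_def C_big)
  also have "\<dots> = g 1 + (\<Sum>j\<le>n. g (Suc (Suc j)))"
    by (simp add: sum.atMost_Suc_shift g_def Y0 del: sum.atMost_Suc)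
  also have "(\<Sum>j\<le>n. smult (C t n j) (Q t (Suc j))) + (g 1 + (\<Sum>j\<le>n. g (Suc (Suc j))))
     = smult (C t (Suc n) 0) (Q t 0) + (\<Sum>j\<le>n. smult (C t (Suc n) (Suc j)) (Q t (Suc j)))"
    by (simp add: g_def CR0 CRS smult_add_left sum.distrib mult.commute)
  also have "\<dots> = (\<Sum>j\<le>Suc n. smult (C t (Suc n) j) (Q t j))"
    by (simp add: sum.atMost_Suc_shift del: sum.atMost_Suc)
  finally show ?case .
qed

lemma reidx: "(\<Sum>j\<le>n. smult (C t n j) (Q t j)) = (\<Sum>m = 0..n div 2. smult (h t m (n - 2*m)) (Q t (n - 2*m)))"
proof -
  let ?f = "\<lambda>j. smult (C t n j) (Q t j)"
  have inj: "inj_on (\<lambda>m. n - 2*m) {0..n div 2}" by (auto simp: inj_on_def)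
  have sub: "(\<lambda>m. n - 2*m) ` {0..n div 2} \<subseteq> {..n}" by auto
  have z: "\<forall>j\<in>{..n} - (\<lambda>m. n - 2*m) ` {0..n div 2}. ?f j = 0"
  proof
    fix j assume j: "j \<in> {..n} - (\<lambda>m. n - 2*m) ` {0..n div 2}"
    have "odd (n - j)"
    proof
      assume "even (n - j)"
      then obtain m where m: "n - j = 2*m" by blast
      then have "j = n - 2*m" "m \<in> {0..n div 2}" using j by auto
      then show False using j by blast
    qed
    then show "?f j = 0" by (simp add: C_def)
  qed
  have "(\<Sum>j\<le>n. ?f j) = (\<Sum>j\<in>(\<lambda>m. n - 2*m) ` {0..n div 2}. ?f j)"
    by (rule sum.mono_neutral_right[OF finite_atMost sub z])
  also have "\<dots> = (\<Sum>m = 0..n div 2. ?f (n - 2*m))" by (rule sum.reindex[OF inj, unfolded comp_def])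
  also have "\<dots> = (\<Sum>m = 0..n div 2. smult (h t m (n - 2*m)) (Q t (n - 2*m)))"
  proof (rule sum.cong[OF refl])
    fix m assume "m \<in> {0..n div 2}"
    then have "n - (n - 2*m) = 2*m" "n - 2*m \<le> n" by auto
    then show "?f (n - 2*m) = smult (h t m (n - 2*m)) (Q t (n - 2*m))" by (simp add: C_def)
  qed
  finally show ?thesis .
qed

theorem corollary2p13:
  fixes t n :: nat
  assumes "t \<in> {0, 1}"
  shows "Bgen ^ n =
    (\<Sum>m = 0..n div 2.
       smult (qfact (n - 2 * m) *
              (\<Sum>\<alpha>\<in>Pt t m (n - 2 * m). \<Prod>i<m. qint (\<alpha> ! i + 1) ^ 2))
             (iCB t (n - 2 * m)))"
proof -
  have hh: "(\<Sum>\<alpha>\<in>Pt t m k. \<Prod>i<m. qint (\<alpha> ! i + 1) ^ 2) = h t m k" for m k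
    unfolding h_def w_def
  proof (rule sum.cong[OF refl])
    fix \<alpha> assume "\<alpha> \<in> Pt t m k"
    then have "length \<alpha> = m" by (simp add: Pt_def)
    then show "(\<Prod>i<m. qint (\<alpha> ! i + 1) ^ 2) = prod_list (map (\<lambda>a. qint (a + 1)^2) \<alpha>)"
      using prod_nth_list[of "\<lambda>a. qint (a + 1)^2" \<alpha>] by simp
  qed
  have ic: "smult (qfact j * c) (iCB t j) = smult c (Q t j)" for j c
  proof -
    have e: "qfact j * c * inverse (qfact j) = c" using qfact_nz[of j] by (simp add: field_simps)
    have "smult (qfact j * c) (iCB t j) = smult (qfact j * c * inverse (qfact j)) (Q t j)"
      by (simp add: iCB_def Q_def[symmetric])
    also have "\<dots> = smult c (Q t j)" by (simp only: e)
    finally show ?thesis .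
  qed
  show ?thesis unfolding hh ic using MT[OF assms, of n] reidx[of t n] by simp
qed
end
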